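(* The image of $\bar\Gamma(2)_2=[\bar\Gamma(2),\bar\Gamma(2)]$ in $\mathrm{PSL}_2(\mathbb{Z}/3\mathbb{Z})$ is equal to $D_3$. For every prime $p>3$, its image in $\mathrm{PSL}_2(\mathbb{Z}/p\mathbb{Z})$ is $\mathrm{PSL}_2(\mathbb{Z}/p\mathbb{Z})$.
   Context: $\bar\Gamma(2)=\Gamma(2)/\{\pm1\}\subset\mathrm{PSL}_2(\mathbb{Z})$, where $\Gamma(2)$ is the principal congruence subgroup of level $2$; images are taken under the reduction maps $\mathrm{PSL}_2(\mathbb{Z})\to\mathrm{PSL}_2(\mathbb{Z}/n\mathbb{Z})$. $D_3\subset\mathrm{PSL}_2(\mathbb{Z}/3\mathbb{Z})$ is the index-$3$ subgroup (the $2$-Sylow subgroup, isomorphic to the Klein four-group) consisting of the classes of $\pm I$, $\pm\begin{pmatrix}0&-1\\1&0\end{pmatrix}$, $\pm\begin{pmatrix}-1&1\\1&1\end{pmatrix}$, $\pm\begin{pmatrix}1&1\\1&-1\end{pmatrix}$. *)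

theory Defs
  imports "HOL-Algebra.Algebra" "HOL-Computational_Algebra.Primes"
begin

text \<open>2x2 integer matrices (a b; c d) represented as tuples (a, b, c, d).\<close>
type_synonym mat2 = "int \<times> int \<times> int \<times> int"

fun mmul :: "mat2 \<Rightarrow> mat2 \<Rightarrow> mat2" where
  "mmul (a, b, c, d) (a2, b2, c2, d2) = (a * a2 + b * c2, a * b2 + b * d2, c * a2 + d * c2, c * b2 + d * d2)"

fun mdet :: "mat2 \<Rightarrow> int" where
  "mdet (a, b, c, d) = a * d - b * c"

fun mneg :: "mat2 \<Rightarrow> mat2" where
  "mneg (a, b, c, d) = (-a, -b, -c, -d)"

definition I2 :: mat2 where "I2 = (1, 0, 0, 1)"

fun mred :: "int \<Rightarrow> mat2 \<Rightarrow> mat2" where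
  "mred n (a, b, c, d) = (a mod n, b mod n, c mod n, d mod n)"

definition SL2Z :: "mat2 monoid" where
  "SL2Z = \<lparr>carrier = {A. mdet A = 1}, monoid.mult = mmul, one = I2\<rparr>"

definition PM :: "mat2 set" where "PM = {I2, mneg I2}"

definition PSL2Z :: "mat2 set monoid" where
  "PSL2Z = SL2Z Mod PM"

definition Gamma2 :: "mat2 set" where
  "Gamma2 = {A \<in> carrier SL2Z. mred 2 A = mred 2 I2}"

definition Gamma2bar :: "mat2 set set" where
  "Gamma2bar = (\<lambda>A. PM #>\<^bsub>SL2Z\<^esub> A) ` Gamma2"

definition psl_red :: "int \<Rightarrow> mat2 set \<Rightarrow> mat2 set" where
  "psl_red n C = mred n ` C"

definition psl_class :: "int \<Rightarrow> mat2 \<Rightarrow> mat2 set" where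
  "psl_class n M = {mred n M, mred n (mneg M)}"

definition PSL2_mod :: "int \<Rightarrow> mat2 set set" where
  "PSL2_mod n = psl_class n ` {M. mdet M mod n = 1 mod n}"

text \<open>The Klein four subgroup D_3 of PSL_2(Z/3Z).\<close>
definition D3 :: "mat2 set set" where
  "D3 = psl_class 3 ` {I2, (0, -1, 1, 0), (-1, 1, 1, 1), (1, 1, 1, -1)}"

end

theory Submission
  imports Defs
begin


fun madj :: "mat2 \<Rightarrow> mat2" where
  "madj (a, b, c, d) = (d, -b, -c, a)"

definition comm :: "mat2 \<Rightarrow> mat2 \<Rightarrow> mat2" where
  "comm A B = mmul (mmul (mmul A B) (madj A)) (madj B)"

lemma mmul_assoc: "mmul (mmul A B) C = mmul A (mmul B C)"
  by (cases A; cases B; cases C) (simp add: algebra_simps)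

lemma mdet_mmul: "mdet (mmul A B) = mdet A * mdet B"
  by (cases A; cases B) (simp add: algebra_simps)

lemma mdet_madj: "mdet (madj A) = mdet A"
  by (cases A) (simp add: algebra_simps)

lemma mmul_I2_left[simp]: "mmul I2 A = A"
  by (cases A) (simp add: I2_def)

lemma mmul_I2_right[simp]: "mmul A I2 = A"
  by (cases A) (simp add: I2_def)

lemma mmul_madj_left: "mdet A = 1 \<Longrightarrow> mmul (madj A) A = I2"
  by (cases A) (simp add: I2_def algebra_simps)

lemma mmul_madj_right: "mdet A = 1 \<Longrightarrow> mmul A (madj A) = I2"
  by (cases A) (simp add: I2_def algebra_simps)

lemma carrier_SL2Z[simp]: "carrier SL2Z = {A. mdet A = 1}"
  by (simp add: SL2Z_def)
lemma mult_SL2Z[simp]: "monoid.mult SL2Z = mmul"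
  by (simp add: SL2Z_def)
lemma one_SL2Z[simp]: "one SL2Z = I2"
  by (simp add: SL2Z_def)

lemma group_SL2Z: "group SL2Z"
proof (rule groupI)
  show "\<And>x y. x \<in> carrier SL2Z \<Longrightarrow> y \<in> carrier SL2Z \<Longrightarrow> x \<otimes>\<^bsub>SL2Z\<^esub> y \<in> carrier SL2Z"
    by (simp add: mdet_mmul)
  show "\<one>\<^bsub>SL2Z\<^esub> \<in> carrier SL2Z" by (simp add: I2_def)
  show "\<And>x y z. x \<in> carrier SL2Z \<Longrightarrow> y \<in> carrier SL2Z \<Longrightarrow> z \<in> carrier SL2Z \<Longrightarrow>
     x \<otimes>\<^bsub>SL2Z\<^esub> y \<otimes>\<^bsub>SL2Z\<^esub> z = x \<otimes>\<^bsub>SL2Z\<^esub> (y \<otimes>\<^bsub>SL2Z\<^esub> z)"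
    by (simp add: mmul_assoc)
  show "\<And>x. x \<in> carrier SL2Z \<Longrightarrow> \<one>\<^bsub>SL2Z\<^esub> \<otimes>\<^bsub>SL2Z\<^esub> x = x" by simp
  show "\<And>x. x \<in> carrier SL2Z \<Longrightarrow> \<exists>y\<in>carrier SL2Z. y \<otimes>\<^bsub>SL2Z\<^esub> x = \<one>\<^bsub>SL2Z\<^esub>"
    by (rule_tac x="madj x" in bexI) (auto simp: mmul_madj_left mdet_madj)
qed

lemma inv_SL2Z: "mdet A = 1 \<Longrightarrow> inv\<^bsub>SL2Z\<^esub> A = madj A"
  by (rule group.inv_equality[OF group_SL2Z]) (auto simp: mmul_madj_left mdet_madj)

lemma mneg_mmul: "mmul (mneg I2) A = mneg A"
  by (cases A) (simp add: I2_def)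

lemma PM_coset: "PM #>\<^bsub>SL2Z\<^esub> A = {A, mneg A}"
  by (auto simp: r_coset_def PM_def mneg_mmul)

lemma normal_PM: "PM \<lhd> SL2Z"
proof -
  interpret G: group SL2Z by (rule group_SL2Z)
  have sub: "subgroup PM SL2Z"
  proof
    show "PM \<subseteq> carrier SL2Z" by (auto simp: PM_def I2_def)
    show "\<And>x y. x \<in> PM \<Longrightarrow> y \<in> PM \<Longrightarrow> x \<otimes>\<^bsub>SL2Z\<^esub> y \<in> PM"
      by (auto simp: PM_def I2_def)
    show "\<one>\<^bsub>SL2Z\<^esub> \<in> PM" by (simp add: PM_def)
    show "\<And>x. x \<in> PM \<Longrightarrow> inv\<^bsub>SL2Z\<^esub> x \<in> PM"
      by (auto simp: PM_def I2_def inv_SL2Z)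
  qed
  show ?thesis
    unfolding G.normal_inv_iff
  proof (intro conjI sub ballI)
    fix x h assume x: "x \<in> carrier SL2Z" and h: "h \<in> PM"
    have d: "mdet x = 1" using x by simp
    have m1: "mmul x (mneg I2) = mneg x" by (cases x) (simp add: I2_def)
    have m2: "mmul (mneg x) (madj x) = mneg I2"
      using d by (cases x) (simp add: I2_def algebra_simps)
    from h d show "x \<otimes>\<^bsub>SL2Z\<^esub> h \<otimes>\<^bsub>SL2Z\<^esub> inv\<^bsub>SL2Z\<^esub> x \<in> PM"
      unfolding PM_def using m1 m2 mmul_madj_right[OF d] by (auto simp: inv_SL2Z)
  qed
qed

lemma PSL_mult: "mdet A = 1 \<Longrightarrow> mdet B = 1 \<Longrightarrow>
   (PM #>\<^bsub>SL2Z\<^esub> A) \<otimes>\<^bsub>PSL2Z\<^esub> (PM #>\<^bsub>SL2Z\<^esub> B) = PM #>\<^bsub>SL2Z\<^esub> (mmul A B)"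
  using normal.rcos_sum[OF normal_PM, of A B] by (simp add: PSL2Z_def)

lemma PSL_inv: "mdet A = 1 \<Longrightarrow>
   inv\<^bsub>PSL2Z\<^esub> (PM #>\<^bsub>SL2Z\<^esub> A) = PM #>\<^bsub>SL2Z\<^esub> (madj A)"
proof -
  assume A: "mdet A = 1"
  have "PM #>\<^bsub>SL2Z\<^esub> A \<in> carrier (SL2Z Mod PM)"
    using A by (auto simp: carrier_FactGroup)
  then show ?thesis
    using normal.inv_FactGroup[OF normal_PM] normal.rcos_inv[OF normal_PM, of A] A
    by (simp add: PSL2Z_def inv_SL2Z)
qed

lemma PSL_one: "\<one>\<^bsub>PSL2Z\<^esub> = PM #>\<^bsub>SL2Z\<^esub> I2"
  unfolding PSL2Z_def PM_coset by (simp add: PM_def)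

lemma PSL_comm: "mdet A = 1 \<Longrightarrow> mdet B = 1 \<Longrightarrow>
  (PM #>\<^bsub>SL2Z\<^esub> A) \<otimes>\<^bsub>PSL2Z\<^esub> (PM #>\<^bsub>SL2Z\<^esub> B) \<otimes>\<^bsub>PSL2Z\<^esub>
  inv\<^bsub>PSL2Z\<^esub> (PM #>\<^bsub>SL2Z\<^esub> A) \<otimes>\<^bsub>PSL2Z\<^esub> inv\<^bsub>PSL2Z\<^esub> (PM #>\<^bsub>SL2Z\<^esub> B)
  = PM #>\<^bsub>SL2Z\<^esub> comm A B"
  by (simp add: PSL_inv PSL_mult mdet_mmul mdet_madj comm_def)

lemma mdet_comm: "mdet A = 1 \<Longrightarrow> mdet B = 1 \<Longrightarrow> mdet (comm A B) = 1"
  by (simp add: comm_def mdet_mmul mdet_madj)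

lemma derived_induct:
  assumes x: "x \<in> derived PSL2Z Gamma2bar"
    and one: "P I2"
    and mul: "\<And>A B. mdet A = 1 \<Longrightarrow> mdet B = 1 \<Longrightarrow> P A \<Longrightarrow> P B \<Longrightarrow> P (mmul A B)"
    and adj: "\<And>A. mdet A = 1 \<Longrightarrow> P A \<Longrightarrow> P (madj A)"
    and cm: "\<And>A B. A \<in> Gamma2 \<Longrightarrow> B \<in> Gamma2 \<Longrightarrow> P (comm A B)"
  shows "\<exists>A. mdet A = 1 \<and> P A \<and> x = PM #>\<^bsub>SL2Z\<^esub> A"
proof -
  have ds: "\<exists>A. mdet A = 1 \<and> P A \<and> h = PM #>\<^bsub>SL2Z\<^esub> A" if "h \<in> derived_set PSL2Z Gamma2bar" for h
  proof -
    from that obtain A B where A: "A \<in> Gamma2" and B: "B \<in> Gamma2" and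
      h: "h = (PM #>\<^bsub>SL2Z\<^esub> A) \<otimes>\<^bsub>PSL2Z\<^esub> (PM #>\<^bsub>SL2Z\<^esub> B) \<otimes>\<^bsub>PSL2Z\<^esub>
  inv\<^bsub>PSL2Z\<^esub> (PM #>\<^bsub>SL2Z\<^esub> A) \<otimes>\<^bsub>PSL2Z\<^esub> inv\<^bsub>PSL2Z\<^esub> (PM #>\<^bsub>SL2Z\<^esub> B)"
      by (auto simp: Gamma2bar_def)
    have dA: "mdet A = 1" and dB: "mdet B = 1" using A B by (auto simp: Gamma2_def)
    show ?thesis apply (rule exI[of _ "comm A B"])
      using PSL_comm[OF dA dB] h cm[OF A B] mdet_comm[OF dA dB] by auto
  qed
  from x show ?thesis
    unfolding derived_def
  proof (induction rule: generate.induct)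
    case one
    then show ?case apply (rule_tac exI[of _ I2]) using PSL_one \<open>P I2\<close> by (auto simp: I2_def)
  next
    case (incl h)
    then show ?case using ds by blast
  next
    case (inv h)
    then obtain A where A: "mdet A = 1" "P A" "h = PM #>\<^bsub>SL2Z\<^esub> A" using ds by blast
    then show ?case apply (rule_tac exI[of _ "madj A"])
      using PSL_inv[OF A(1)] adj[OF A(1,2)] mdet_madj[of A] by auto
  next
    case (eng h1 h2)
    then obtain A B where "mdet A = 1" "P A" "h1 = PM #>\<^bsub>SL2Z\<^esub> A"
       "mdet B = 1" "P B" "h2 = PM #>\<^bsub>SL2Z\<^esub> B" by blast
    then show ?case apply (rule_tac exI[of _ "mmul A B"])
      using PSL_mult mul mdet_mmul by auto
  qed
qed

lemma comm_in_derived: "A \<in> Gamma2 \<Longrightarrow> B \<in> Gamma2 \<Longrightarrow>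
   PM #>\<^bsub>SL2Z\<^esub> comm A B \<in> derived PSL2Z Gamma2bar"
proof -
  assume A: "A \<in> Gamma2" and B: "B \<in> Gamma2"
  have dA: "mdet A = 1" and dB: "mdet B = 1" using A B by (auto simp: Gamma2_def)
  have "PM #>\<^bsub>SL2Z\<^esub> comm A B \<in> derived_set PSL2Z Gamma2bar"
    using A B PSL_comm[OF dA dB, symmetric] unfolding Gamma2bar_def by blast
  then show ?thesis unfolding derived_def by (rule generate.incl)
qed

lemma derived_mult: "PM #>\<^bsub>SL2Z\<^esub> A \<in> derived PSL2Z Gamma2bar \<Longrightarrow>
  PM #>\<^bsub>SL2Z\<^esub> B \<in> derived PSL2Z Gamma2bar \<Longrightarrow> mdet A = 1 \<Longrightarrow> mdet B = 1 \<Longrightarrow>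
  PM #>\<^bsub>SL2Z\<^esub> mmul A B \<in> derived PSL2Z Gamma2bar"
  using generate.eng[of "PM #>\<^bsub>SL2Z\<^esub> A" PSL2Z _ "PM #>\<^bsub>SL2Z\<^esub> B"]
  by (simp add: derived_def PSL_mult)

lemma one_in_derived: "PM #>\<^bsub>SL2Z\<^esub> I2 \<in> derived PSL2Z Gamma2bar"
  unfolding derived_def PSL_one[symmetric] by (rule generate.one)

lemma psl_red_coset: "psl_red n (PM #>\<^bsub>SL2Z\<^esub> A) = psl_class n A"
  by (simp add: psl_red_def PM_coset psl_class_def)

lemma mod_lin: "((x::int)*y + z*w) mod n = ((x mod n)*(y mod n) + (z mod n)*(w mod n)) mod n"
  by (metis mod_add_eq mod_mult_eq)

lemma mred_mmul: "mred n (mmul A B) = mred n (mmul (mred n A) (mred n B))"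
  apply (cases A; cases B)
  apply (simp only: mmul.simps mred.simps)
  apply (metis mod_lin)
  done

lemma mred_madj: "mred n (madj A) = mred n (madj (mred n A))"
  by (cases A) (simp only: madj.simps mneg.simps mred.simps mod_minus_eq mod_mod_trivial)

lemma mred_mneg: "mred n (mneg A) = mred n (mneg (mred n A))"
  by (cases A) (simp only: madj.simps mneg.simps mred.simps mod_minus_eq mod_mod_trivial)

lemma mred_comm: "mred n (comm A B) = mred n (comm (mred n A) (mred n B))"
  unfolding comm_def
  by (metis mred_mmul mred_madj)

lemma mneg_mneg[simp]: "mneg (mneg A) = A"
  by (cases A) simp

lemma psl_class_eq: "mred n M = mred n N \<or> mred n M = mred n (mneg N) \<Longrightarrow>
   psl_class n M = psl_class n N"
proof -
  assume h: "mred n M = mred n N \<or> mred n M = mred n (mneg N)"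
  show ?thesis
  proof (cases "mred n M = mred n N")
    case True
    have "mred n (mneg M) = mred n (mneg N)"
      by (metis True mred_mneg)
    then show ?thesis unfolding psl_class_def using True by simp
  next
    case False
    then have m: "mred n M = mred n (mneg N)" using h by blast
    have "mred n (mneg M) = mred n N"
      by (metis m mred_mneg mneg_mneg)
    then show ?thesis unfolding psl_class_def using m by (simp add: insert_commute)
  qed
qed

lemma Gamma2_I: "mdet A = 1 \<Longrightarrow> mred 2 A = (1,0,0,1) \<Longrightarrow> A \<in> Gamma2"
  by (simp add: Gamma2_def I2_def)



definition Q3L :: "mat2 list" where
  "Q3L = [(1,0,0,1),(2,0,0,2),(0,2,1,0),(0,1,2,0),(2,1,1,1),(1,2,2,2),(1,1,1,2),(2,2,2,1)]"

definition L24 :: "mat2 list" where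
  "L24 = [(0,1,2,0), (0,1,2,1), (0,1,2,2), (0,2,1,0), (0,2,1,1), (0,2,1,2), (1,0,0,1), (1,0,1,1), (1,0,2,1), (1,1,0,1), (1,1,1,2), (1,1,2,0), (1,2,0,1), (1,2,1,0), (1,2,2,2), (2,0,0,2), (2,0,1,2), (2,0,2,2), (2,1,0,2), (2,1,1,1), (2,1,2,0), (2,2,0,2), (2,2,1,0), (2,2,2,1)]"

definition q3 :: "mat2 \<Rightarrow> bool" where "q3 M \<longleftrightarrow> mred 3 M \<in> set Q3L"

lemma res3: "(x::int) mod 3 \<in> {0,1,2}"
proof -
  have "0 \<le> x mod 3" "x mod 3 < 3" by auto
  then show ?thesis by auto
qed

lemma fin81: "\<forall>x\<in>{0,1,2::int}. \<forall>y\<in>{0,1,2::int}. \<forall>z\<in>{0,1,2::int}. \<forall>w\<in>{0,1,2::int}.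
   (x*w - y*z) mod 3 = 1 \<longrightarrow> (x,y,z,w) \<in> set L24"
  by (simp add: L24_def)

lemma L24_mem: "mdet A = 1 \<Longrightarrow> mred 3 A \<in> set L24"
proof -
  assume d: "mdet A = 1"
  obtain a1 b1 c1 d1 where Ae: "A = (a1,b1,c1,d1)" by (cases A) auto
  have "(a1 * d1 - b1 * c1) mod 3 = 1" using d Ae by simp
  then have h: "((a1 mod 3) * (d1 mod 3) - (b1 mod 3) * (c1 mod 3)) mod 3 = 1"
    by (metis mod_diff_eq mod_mult_eq)
  show ?thesis using fin81[rule_format, OF res3 res3 res3 res3 h] Ae by simp
qed

lemma fin_comm: "\<forall>u\<in>set L24. \<forall>v\<in>set L24. mred 3 (comm u v) \<in> set Q3L"
  by (simp add: L24_def Q3L_def comm_def)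

lemma fin_mul: "\<forall>u\<in>set Q3L. \<forall>v\<in>set Q3L. mred 3 (mmul u v) \<in> set Q3L"
  by (simp add: Q3L_def)

lemma fin_adj: "\<forall>u\<in>set Q3L. mred 3 (madj u) \<in> set Q3L"
  by (simp add: Q3L_def)

lemma q3_mul: "q3 A \<Longrightarrow> q3 B \<Longrightarrow> q3 (mmul A B)"
  unfolding q3_def using fin_mul mred_mmul by metis

lemma q3_adj: "q3 A \<Longrightarrow> q3 (madj A)"
  unfolding q3_def using fin_adj mred_madj by metis

lemma q3_comm: "mdet A = 1 \<Longrightarrow> mdet B = 1 \<Longrightarrow> q3 (comm A B)"
  unfolding q3_def using fin_comm mred_comm L24_mem by metis

lemma q3_I2: "q3 I2" by (simp add: q3_def Q3L_def I2_def)

lemma Q3L_rep: "R \<in> set Q3L \<Longrightarrow> \<exists>N \<in> {I2, (0,-1,1,0), (-1,1,1,1), (1,1,1,-1)}.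
    R = mred 3 N \<or> R = mred 3 (mneg N)"
  by (auto simp: Q3L_def I2_def)

lemma part3_sub: "psl_red 3 ` derived PSL2Z Gamma2bar \<subseteq> D3"
proof
  fix y assume "y \<in> psl_red 3 ` derived PSL2Z Gamma2bar"
  then obtain x where x: "x \<in> derived PSL2Z Gamma2bar" and y: "y = psl_red 3 x" by blast
  obtain A where A: "mdet A = 1" "q3 A" "x = PM #>\<^bsub>SL2Z\<^esub> A"
    using derived_induct[OF x, of q3] q3_I2 q3_mul q3_adj q3_comm by (auto simp: Gamma2_def)
  obtain N where N: "N \<in> {I2, (0,-1,1,0), (-1,1,1,1), (1,1,1,-1)}"
     "mred 3 A = mred 3 N \<or> mred 3 A = mred 3 (mneg N)"
    using Q3L_rep A(2) unfolding q3_def by blast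
  have "y = psl_class 3 N" using y A(3) psl_red_coset psl_class_eq[OF N(2)] by simp
  then show "y \<in> D3" using N(1) unfolding D3_def by blast
qed

lemma part3_sup: "D3 \<subseteq> psl_red 3 ` derived PSL2Z Gamma2bar"
proof -
  have c1: "psl_class 3 I2 \<in> psl_red 3 ` derived PSL2Z Gamma2bar"
    using one_in_derived psl_red_coset by (metis image_eqI)
  have cm: "psl_class 3 T0 \<in> psl_red 3 ` derived PSL2Z Gamma2bar"
    if "U \<in> Gamma2" "V \<in> Gamma2" "psl_class 3 T0 = psl_class 3 (comm U V)" for T0 U V
    using comm_in_derived[OF that(1,2)] psl_red_coset that(3) by (metis image_eqI)
  have c2: "psl_class 3 (0,-1,1,0) \<in> psl_red 3 ` derived PSL2Z Gamma2bar"
    by (rule cm[of "(1,2,0,1)" "(1,0,2,1)"]) (auto intro!: Gamma2_I psl_class_eq simp: comm_def)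
  have c3: "psl_class 3 (-1,1,1,1) \<in> psl_red 3 ` derived PSL2Z Gamma2bar"
    by (rule cm[of "(1,2,0,1)" "(1,0,-2,1)"]) (auto intro!: Gamma2_I psl_class_eq simp: comm_def)
  have c4: "psl_class 3 (1,1,1,-1) \<in> psl_red 3 ` derived PSL2Z Gamma2bar"
    by (rule cm[of "(1,0,2,1)" "(1,-2,0,1)"]) (auto intro!: Gamma2_I psl_class_eq simp: comm_def)
  show ?thesis unfolding D3_def using c1 c2 c3 c4 by blast
qed

lemma part3: "psl_red 3 ` derived PSL2Z Gamma2bar = D3"
  using part3_sub part3_sup by blast



definition Tset :: "int \<Rightarrow> mat2 set" where
  "Tset n = {M. \<exists>A. PM #>\<^bsub>SL2Z\<^esub> A \<in> derived PSL2Z Gamma2bar \<and> mdet A = 1 \<and> mred n A = mred n M}"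

lemma TsetI: "PM #>\<^bsub>SL2Z\<^esub> A \<in> derived PSL2Z Gamma2bar \<Longrightarrow> mdet A = 1 \<Longrightarrow> mred n A = mred n M \<Longrightarrow> M \<in> Tset n"
  unfolding Tset_def mem_Collect_eq by blast

lemma T_mul: "M \<in> Tset n \<Longrightarrow> N \<in> Tset n \<Longrightarrow> mmul M N \<in> Tset n"
proof -
  assume "M \<in> Tset n" "N \<in> Tset n"
  then obtain A B where A: "PM #>\<^bsub>SL2Z\<^esub> A \<in> derived PSL2Z Gamma2bar" "mdet A = 1" "mred n A = mred n M"
    and B: "PM #>\<^bsub>SL2Z\<^esub> B \<in> derived PSL2Z Gamma2bar" "mdet B = 1" "mred n B = mred n N"
    unfolding Tset_def by blast
  have "mred n (mmul A B) = mred n (mmul M N)"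
    by (metis A(3) B(3) mred_mmul)
  then show ?thesis
    using TsetI derived_mult[OF A(1) B(1) A(2) B(2)] mdet_mmul[of A B] A(2) B(2) by auto
qed

lemma T_cong: "M \<in> Tset n \<Longrightarrow> mred n M = mred n N \<Longrightarrow> N \<in> Tset n"
  unfolding Tset_def by auto

lemma T_comm: "A \<in> Gamma2 \<Longrightarrow> B \<in> Gamma2 \<Longrightarrow> comm A B \<in> Tset n"
  by (rule TsetI[OF comm_in_derived]) (auto simp: Gamma2_def mdet_comm)

lemma comm_upper0: "comm (a,b,c,d) (1,s,0,1) = ((a * d - b * c) - s * a * c,
   s * (a^2 - (a * d - b * c)) + s^2 * a * c, - s * c^2, (a * d - b * c) + s * a * c + s^2 * c^2)"
  by (simp add: comm_def algebra_simps power2_eq_square)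

lemma comm_lower0: "comm (a,b,c,d) (1,0,s,1) = ((a * d - b * c) + s * b * d + s^2 * b^2, - s * b^2,
   s * (d^2 - (a * d - b * c)) + s^2 * b * d, (a * d - b * c) - s * b * d)"
  by (simp add: comm_def algebra_simps power2_eq_square)

lemma comm_upper: "a * d - b * c = 1 \<Longrightarrow>
  comm (a,b,c,d) (1,s,0,1) = (1 - s * a * c, s * (a^2 - 1) + s^2 * a * c, - s * c^2, 1 + s * a * c + s^2 * c^2)"
  unfolding comm_upper0 by simp

lemma comm_lower: "a * d - b * c = 1 \<Longrightarrow>
  comm (a,b,c,d) (1,0,s,1) = (1 + s * b * d + s^2 * b^2, - s * b^2, s * (d^2 - 1) + s^2 * b * d, 1 - s * b * d)"
  unfolding comm_lower0 by simp

lemma dvd_mod: "(p::int) dvd x - y \<Longrightarrow> x mod p = y mod p"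
  by (simp add: mod_eq_dvd_iff)

lemma solve_mod: "Factorial_Ring.prime (p::int) \<Longrightarrow> \<not> p dvd c \<Longrightarrow> \<exists>x. p dvd x * c - r"
proof -
  assume p: "Factorial_Ring.prime p" and c: "\<not> p dvd c"
  have "coprime p c" using prime_imp_coprime[OF p c] .
  then have g: "gcd c p = 1" by (simp add: coprime_iff_gcd_eq_1 gcd.commute)
  obtain u v where "u * c + v * p = gcd c p" using bezout_int by blast
  then have uv: "u * c + v * p = 1" using g by simp
  have "(r * u) * c - r = r * (u * c + v * p) - r - p * (r * v)" by (simp add: algebra_simps)
  also have "\<dots> = p * (- r * v)" using uv by simp
  finally have "(r * u) * c - r = p * (- r * v)" .
  then show ?thesis by (metis dvdI)
qed

locale pctx =
  fixes p :: int
  assumes pp: "Factorial_Ring.prime p" and p3: "p > 3"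
begin

lemma p_odd: "odd p"
proof
  assume "even p"
  then have "2 dvd p" by simp
  then have "2 = p" using pp by (simp add: prime_int_iff) (smt (verit) p3)
  then show False using p3 by simp
qed

lemma not_dvd_small: "\<not> p dvd 6" "\<not> p dvd 3" "\<not> p dvd 2"
proof -
  have "p dvd 6 \<Longrightarrow> p \<le> 6" by (simp add: zdvd_imp_le)
  show "\<not> p dvd 2" using p3 zdvd_imp_le[of p 2] by auto
  show "\<not> p dvd 3" using p3 zdvd_imp_le[of p 3] by auto
  show "\<not> p dvd 6"
  proof
    assume "p dvd 6"
    then have "p dvd 2 * 3" by simp
    then have "p dvd 2 \<or> p dvd 3" using pp prime_dvd_mult_iff by blast
    then show False using p3 zdvd_imp_le[of p 2] zdvd_imp_le[of p 3] by auto
  qed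
qed

lemma bez: "\<exists>d e. (p + 2) * d + 4 * p^2 * e = 1"
proof -
  have c1: "coprime (p + 2) p"
  proof -
    have "coprime p (p + 2)"
    proof (rule prime_imp_coprime[OF pp])
      show "\<not> p dvd p + 2" using not_dvd_small(3) by (simp add: dvd_add_right_iff)
    qed
    then show ?thesis by (simp add: coprime_commute)
  qed
  have c2: "coprime (p + 2) 2" using p_odd by simp
  have c4: "coprime (p + 2) (2 * 2)" using c2 by (simp only: coprime_mult_right_iff)
  have c5: "coprime (p + 2) (p * p)" using c1 by (simp only: coprime_mult_right_iff)
  have "coprime (p + 2) ((2 * 2) * (p * p))" using c4 c5 by (simp only: coprime_mult_right_iff)
  then have "coprime (p + 2) (4 * p^2)" by (simp add: power2_eq_square)
  then have g: "gcd (p + 2) (4 * p^2) = 1" by (simp add: coprime_iff_gcd_eq_1)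
  obtain u v where "u * (p + 2) + v * (4 * p^2) = gcd (p + 2) (4 * p^2)" using bezout_int by blast
  then show ?thesis using g by (metis mult.commute mult.assoc)
qed

lemma dvd_lin: "(p::int) dvd z \<Longrightarrow> x - y = z + p * w \<Longrightarrow> x mod p = y mod p"
  by (rule dvd_mod) simp

lemma diagX: "\<exists>a d e. a * d - (2 * p) * (- 2 * p * e) = 1 \<and> a = p + 2 \<and> odd d"
proof -
  obtain d e where de: "(p + 2) * d + 4 * p^2 * e = 1" using bez by blast
  have det: "(p + 2) * d - (2 * p) * (- 2 * p * e) = 1"
    using de by (simp add: algebra_simps power2_eq_square)
  have "odd d"
  proof
    assume "even d"
    then have "even ((p + 2) * d + 4 * p^2 * e)" by simp
    then show False using de by simp
  qed
  then show ?thesis using det by blast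
qed

lemma upper_T: "(1, u, 0, 1) \<in> Tset p"
proof -
  obtain a d e where det: "a * d - (2 * p) * (- 2 * p * e) = 1" and a: "a = p + 2" and dodd: "odd d"
    using diagX by blast
  have aodd: "odd a" using a p_odd by simp
  have XG: "(a, 2 * p, - 2 * p * e, d) \<in> Gamma2"
    using det aodd dodd by (intro Gamma2_I) (auto simp: odd_iff_mod_2_eq_one)
  obtain t where t: "p dvd t * 6 - u" using solve_mod[OF pp not_dvd_small(1)] by blast
  have UG: "(1, 2 * t, 0, 1) \<in> Gamma2" by (intro Gamma2_I) simp_all
  have cT: "comm (a, 2 * p, - 2 * p * e, d) (1, 2 * t, 0, 1) \<in> Tset p" by (rule T_comm[OF XG UG])
  define s where "s = 2 * t"
  define c where "c = - 2 * p * e"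
  have ce: "comm (a, 2 * p, - 2 * p * e, d) (1, 2 * t, 0, 1) =
     (1 - s * a * c, s * (a^2 - 1) + s^2 * a * c, - s * c^2, 1 + s * a * c + s^2 * c^2)"
    unfolding s_def c_def by (rule comm_upper[OF det])
  have e1: "(1 - s * a * c) mod p = 1 mod p"
    by (rule dvd_lin[where z=0 and w="2 * s * a * e"]) (simp_all add: c_def algebra_simps)
  have e2: "(s * (a^2 - 1) + s^2 * a * c) mod p = u mod p"
    by (rule dvd_lin[OF t, where w="2 * t * (p + 4) - 8 * t^2 * a * e"])
       (simp add: s_def c_def a algebra_simps power2_eq_square)
  have e3: "(- s * c^2) mod p = 0 mod p"
    by (rule dvd_lin[where z=0 and w="- 4 * s * p * e^2"]) (simp_all add: c_def algebra_simps power2_eq_square)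
  have e4: "(1 + s * a * c + s^2 * c^2) mod p = 1 mod p"
    by (rule dvd_lin[where z=0 and w="- 2 * s * a * e + 4 * s^2 * p * e^2"])
       (simp_all add: c_def algebra_simps power2_eq_square)
  show ?thesis
    by (rule T_cong[OF cT]) (simp only: ce mred.simps e1 e2 e3 e4)
qed

lemma lower_T: "(1, 0, u, 1) \<in> Tset p"
proof -
  obtain a d e where det: "a * d - (2 * p) * (- 2 * p * e) = 1" and a: "a = p + 2" and dodd: "odd d"
    using diagX by blast
  have det': "d * a - (2 * p) * (- 2 * p * e) = 1" using det by (simp add: mult.commute)
  have aodd: "odd a" using a p_odd by simp
  have XG: "(d, 2 * p, - 2 * p * e, a) \<in> Gamma2"
    using det' aodd dodd by (intro Gamma2_I) (auto simp: odd_iff_mod_2_eq_one)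
  obtain t where t: "p dvd t * 6 - u" using solve_mod[OF pp not_dvd_small(1)] by blast
  have UG: "(1, 0, 2 * t, 1) \<in> Gamma2" by (intro Gamma2_I) simp_all
  have cT: "comm (d, 2 * p, - 2 * p * e, a) (1, 0, 2 * t, 1) \<in> Tset p" by (rule T_comm[OF XG UG])
  define s where "s = 2 * t"
  define b where "b = 2 * p"
  have ce: "comm (d, 2 * p, - 2 * p * e, a) (1, 0, 2 * t, 1) =
     (1 + s * b * a + s^2 * b^2, - s * b^2, s * (a^2 - 1) + s^2 * b * a, 1 - s * b * a)"
    unfolding s_def b_def by (rule comm_lower[OF det'])
  have e1: "(1 + s * b * a + s^2 * b^2) mod p = 1 mod p"
    by (rule dvd_lin[where z=0 and w="2 * s * a + 4 * s^2 * p"]) (simp_all add: b_def algebra_simps power2_eq_square)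
  have e2: "(- s * b^2) mod p = 0 mod p"
    by (rule dvd_lin[where z=0 and w="- 4 * s * p"]) (simp_all add: b_def algebra_simps power2_eq_square)
  have e3: "(s * (a^2 - 1) + s^2 * b * a) mod p = u mod p"
    by (rule dvd_lin[OF t, where w="2 * t * (p + 4) + 8 * t^2 * a"])
       (simp add: s_def b_def a algebra_simps power2_eq_square)
  have e4: "(1 - s * b * a) mod p = 1 mod p"
    by (rule dvd_lin[where z=0 and w="- 2 * s * a"]) (simp_all add: b_def algebra_simps)
  show ?thesis
    by (rule T_cong[OF cT]) (simp only: ce mred.simps e1 e2 e3 e4)
qed

lemma decomp1: "\<not> p dvd c \<Longrightarrow> p dvd (a * d - b * c - 1) \<Longrightarrow> (a, b, c, d) \<in> Tset p"
proof -
  assume c: "\<not> p dvd c" and g: "p dvd (a * d - b * c - 1)"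
  obtain x where x: "p dvd x * c - (a - 1)" using solve_mod[OF pp c] by blast
  obtain y where y: "p dvd y * c - (d - 1)" using solve_mod[OF pp c] by blast
  have prod: "mmul (mmul (1, x, 0, 1) (1, 0, c, 1)) (1, y, 0, 1) = (1 + x * c, (1 + x * c) * y + x, c, c * y + 1)"
    by (simp add: algebra_simps)
  have T: "mmul (mmul (1, x, 0, 1) (1, 0, c, 1)) (1, y, 0, 1) \<in> Tset p"
    by (intro T_mul upper_T lower_T)
  have e1: "(1 + x * c) mod p = a mod p"
    by (rule dvd_lin[OF x, where w=0]) simp
  have e4: "(c * y + 1) mod p = d mod p"
    by (rule dvd_lin[OF y, where w=0]) (simp add: algebra_simps)
  have "c * ((1 + x * c) * y + x - b) = (y * c - (d - 1)) + (x * c - (a - 1)) * (y * c - (d - 1))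
     + (x * c - (a - 1)) * d + (a - 1) * (y * c - (d - 1)) + (a * d - b * c - 1)"
    by (simp add: algebra_simps)
  moreover have "p dvd (y * c - (d - 1)) + (x * c - (a - 1)) * (y * c - (d - 1))
     + (x * c - (a - 1)) * d + (a - 1) * (y * c - (d - 1)) + (a * d - b * c - 1)"
    using x y g by (intro dvd_add dvd_mult dvd_mult2) auto
  ultimately have "p dvd c * ((1 + x * c) * y + x - b)" by simp
  then have "p dvd ((1 + x * c) * y + x - b)" using c pp prime_dvd_mult_iff by blast
  then have e2: "((1 + x * c) * y + x) mod p = b mod p" by (rule dvd_mod)
  show ?thesis
    by (rule T_cong[OF T]) (simp only: prod mred.simps e1 e2 e4)
qed

lemma decomp: "mdet M mod p = 1 mod p \<Longrightarrow> M \<in> Tset p"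
proof -
  assume h: "mdet M mod p = 1 mod p"
  obtain a b c d where M: "M = (a, b, c, d)" by (cases M) auto
  have g: "p dvd (a * d - b * c - 1)" using h M by (simp add: mod_eq_dvd_iff)
  show ?thesis
  proof (cases "p dvd c")
    case False
    then show ?thesis using decomp1 g M by simp
  next
    case True
    have na: "\<not> p dvd a"
    proof
      assume "p dvd a"
      then have "p dvd a * d - b * c" using True by (simp add: dvd_diff)
      then have "p dvd (a * d - b * c) - (a * d - b * c - 1)" using g by (rule dvd_diff)
      then have "p dvd 1" by simp
      then show False using p3 by simp
    qed
    have nac: "\<not> p dvd a + c" using na True by (simp add: dvd_add_left_iff)
    have g2: "p dvd (a * (b + d) - b * (a + c) - 1)" using g by (simp add: algebra_simps)
    have T1: "(a, b, a + c, b + d) \<in> Tset p" using decomp1[OF nac g2] .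
    have "mmul (1, 0, -1, 1) (a, b, a + c, b + d) \<in> Tset p" by (rule T_mul[OF lower_T T1])
    moreover have "mmul (1, 0, -1, 1) (a, b, a + c, b + d) = M" using M by simp
    ultimately show ?thesis by simp
  qed
qed

lemma partp: "psl_red p ` derived PSL2Z Gamma2bar = PSL2_mod p"
proof
  show "psl_red p ` derived PSL2Z Gamma2bar \<subseteq> PSL2_mod p"
  proof
    fix y assume "y \<in> psl_red p ` derived PSL2Z Gamma2bar"
    then obtain x where x: "x \<in> derived PSL2Z Gamma2bar" and y: "y = psl_red p x" by blast
    obtain A where A: "mdet A = 1" "x = PM #>\<^bsub>SL2Z\<^esub> A"
      using derived_induct[OF x, of "\<lambda>_. True"] by auto
    have "y = psl_class p A" using y A(2) psl_red_coset by simp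
    then show "y \<in> PSL2_mod p" unfolding PSL2_mod_def using A(1) by auto
  qed
next
  show "PSL2_mod p \<subseteq> psl_red p ` derived PSL2Z Gamma2bar"
  proof
    fix y assume "y \<in> PSL2_mod p"
    then obtain M where M: "mdet M mod p = 1 mod p" "y = psl_class p M"
      unfolding PSL2_mod_def by blast
    obtain A where A: "PM #>\<^bsub>SL2Z\<^esub> A \<in> derived PSL2Z Gamma2bar" "mred p A = mred p M"
      using decomp[OF M(1)] unfolding Tset_def by blast
    have "y = psl_red p (PM #>\<^bsub>SL2Z\<^esub> A)"
      using M(2) psl_red_coset psl_class_eq A(2) by metis
    then show "y \<in> psl_red p ` derived PSL2Z Gamma2bar" using A(1) by blast
  qed
qed

end


theorem proposition12:
  shows "psl_red 3 ` derived PSL2Z Gamma2bar = D3 \<and>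
         (\<forall>p::nat. Factorial_Ring.prime p \<and> p > 3 \<longrightarrow>
            psl_red (int p) ` derived PSL2Z Gamma2bar = PSL2_mod (int p))"
proof (intro conjI allI impI)
  show "psl_red 3 ` derived PSL2Z Gamma2bar = D3" by (rule part3)
next
  fix p :: nat
  assume h: "Factorial_Ring.prime p \<and> p > 3"
  interpret pctx "int p"
    by unfold_locales (use h in auto)
  show "psl_red (int p) ` derived PSL2Z Gamma2bar = PSL2_mod (int p)" by (rule partp)
qed

end
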